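(* Let $\mathfrak{B}$ be a linear time-invariant behavior with signal space $\mathbb{R}^{\mathrm{w}}$ whose restriction to the interval $[k-L^-,k+L^+]$ (with $L^-+L^++1=L$) is represented as $\hat{w}_{[k-L^-,k+L^+]}=\mathcal{F} z_k$ for a matrix $\mathcal{F}$ and arbitrary vector $z_k$. Let $\mathfrak{B}_{sV}$ be the dissipative behavior with manifest variable $(s,V)$ described by $V(k)-V(k-1)\leq s(k)$ for all $k$, with $V\geq 0$, and let the interconnection between $\mathfrak{B}$ and $\mathfrak{B}_{sV}$ be given by the quadratic difference forms $s(k)=Q_\Phi(w)(k)$, $V(k)=Q_\Psi(w)(k)$ of orders $K_\Phi$ and $K_\Psi$ with symmetric coefficient matrices $\widetilde{\Phi}$ and $\widetilde{\Psi}$. Assume that $L^-=\max\{K_\Phi,K_\Psi+1\}$. If $L^->\mathtt{L}(\mathfrak{B})$ (the lag of $\mathfrak{B}$), $\widetilde{\Psi}\geq0$ and, for all $l\in\{0,1,\ldots,L^+\}$, $$z_k^\top\mathcal{F}_l^\top (\widehat{\Phi}-\nabla\widehat{\Psi})\mathcal{F}_lz_k\geq0$$ holds for any $z_k$, where $\mathcal{F}_l$ denotes the sub-matrix of $\mathcal{F}$ corresponding to the trajectory segment $\hat{w}_{[k-L^-+l,k+l]}$, then $\mathfrak{B}=\pi_{w}(\mathfrak{B}_{ps})$, where $\mathfrak{B}_{ps}=(\mathfrak{B}\times\mathfrak{B}_{sV})\cap\mathfrak{B}_{s}^\Pi$. In other words, $\mathfrak{B}$ is $(Q_\Phi(w),Q_\Psi(w))$-dissipative.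 Furthermore, if $L^+=0$, then the family of inequalities $z_k^\top\mathcal{F}_l^\top (\widehat{\Phi}-\nabla\widehat{\Psi})\mathcal{F}_lz_k\geq0$ reduces to the single linear matrix inequality $$\mathcal{F}^\top (\widehat{\Phi}-\nabla\widehat{\Psi})\mathcal{F}\geq0.$$
   Context: Discrete time axis $\mathbb{T}\subset\mathbb{Z}^{\geq0}$. A dynamical system is a triple $(\mathbb{T},\mathbb{W},\mathfrak{B})$ with behavior $\mathfrak{B}\subset\mathbb{W}^{\mathbb{T}}$; $\hat{w}_{[a,b]}=\mathrm{col}(w(a),\ldots,w(b))$ and $\mathfrak{B}_{|[a,b]}$ is the behavior restricted to $[a,b]$. The lag $\mathtt{L}(\mathfrak{B})$ is the smallest integer such that $w_{|[k,k+\mathtt{L}(\mathfrak{B})]}\in\mathfrak{B}_{|[k,k+\mathtt{L}(\mathfrak{B})]}$ for all $k$ implies $w\in\mathfrak{B}$. $\pi_w$ denotes projection of a behavior onto the variable $w$. A quadratic difference form (QdF) of order $K_\Phi$ is $Q_\Phi(w)(k)=\hat{w}_{[k-K_\Phi,k]}^\top\widetilde{\Phi}\hat{w}_{[k-K_\Phi,k]}$ with symmetric $\widetilde{\Phi}$. The rate of change of storage $Q_{\nabla\Psi}(w)(k)=Q_\Psi(w)(k)-Q_\Psi(w)(k-1)$ has coefficient matrix $\nabla\widetilde{\Psi}=\mathrm{diag}(0_{\mathrm{w}},\widetilde{\Psi})-\mathrm{diag}(\widetilde{\Psi},0_{\mathrm{w}})$. Here $\widehat{\Phi}=\mathrm{diag}(0_{k_\Phi\mathrm{w}},\widetilde{\Phi})$,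 $\nabla\widehat{\Psi}=\mathrm{diag}(0_{k_\Psi\mathrm{w}},\nabla\widetilde{\Psi})$, $k_\Phi=L^--K_\Phi$, $k_\Psi=L^--K_\Psi-1$. $\mathfrak{B}_s^\Pi$ is the (virtual) interconnection behavior on $(w,s,V)$ defined by $s=Q_\Phi(w)$, $V=Q_\Psi(w)$. *)

theory Defs
  imports Complex_Main
begin

text \<open>Time axis T = nat. A signal value in R^w is a function
nat => real vanishing at indices >= w; a trajectory is nat => (nat => real).
Vectors/matrices of explicit size are functions nat => real / nat => nat => real
whose entries outside the stated size are irrelevant.\<close>

definition sig_traj :: "nat \<Rightarrow> (nat \<Rightarrow> nat \<Rightarrow> real) \<Rightarrow> bool" where
  "sig_traj w x \<longleftrightarrow> (\<forall>t i. w \<le> i \<longrightarrow> x t i = 0)"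

text \<open>Stacked window col(w(a),...,w(b)), of size (b+1-a)*w.\<close>
definition stack :: "nat \<Rightarrow> nat \<Rightarrow> nat \<Rightarrow> (nat \<Rightarrow> nat \<Rightarrow> real) \<Rightarrow> nat \<Rightarrow> real" where
  "stack w a b x = (\<lambda>j. if j < (b + 1 - a) * w then x (a + j div w) (j mod w) else 0)"

definition mulv :: "nat \<Rightarrow> nat \<Rightarrow> (nat \<Rightarrow> nat \<Rightarrow> real) \<Rightarrow> (nat \<Rightarrow> real) \<Rightarrow> nat \<Rightarrow> real" where
  "mulv m n F z = (\<lambda>i. if i < m then (\<Sum>j<n. F i j * z j) else 0)"

definition quadf :: "nat \<Rightarrow> (nat \<Rightarrow> nat \<Rightarrow> real) \<Rightarrow> (nat \<Rightarrow> real) \<Rightarrow> real" where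
  "quadf n M x = (\<Sum>i<n. \<Sum>j<n. x i * M i j * x j)"

definition symm :: "nat \<Rightarrow> (nat \<Rightarrow> nat \<Rightarrow> real) \<Rightarrow> bool" where
  "symm n M \<longleftrightarrow> (\<forall>i<n. \<forall>j<n. M i j = M j i)"

definition psd :: "nat \<Rightarrow> (nat \<Rightarrow> nat \<Rightarrow> real) \<Rightarrow> bool" where
  "psd n M \<longleftrightarrow> (\<forall>x. quadf n M x \<ge> 0)"

definition congr :: "nat \<Rightarrow> (nat \<Rightarrow> nat \<Rightarrow> real) \<Rightarrow> (nat \<Rightarrow> nat \<Rightarrow> real) \<Rightarrow> nat \<Rightarrow> nat \<Rightarrow> real" where
  "congr N M F = (\<lambda>i j. \<Sum>a<N. \<Sum>b<N. F a i * M a b * F b j)"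

definition blk :: "nat \<Rightarrow> nat \<Rightarrow> (nat \<Rightarrow> nat \<Rightarrow> real) \<Rightarrow> nat \<Rightarrow> nat \<Rightarrow> real" where
  "blk off n M = (\<lambda>i j. if off \<le> i \<and> i < off + n \<and> off \<le> j \<and> j < off + n
                        then M (i - off) (j - off) else 0)"

text \<open>Coefficient matrix of the rate of change: diag(0_w, Psi) - diag(Psi, 0_w),
  Psi of size (K+1)w, result of size (K+2)w.\<close>
definition nabla_coeff :: "nat \<Rightarrow> nat \<Rightarrow> (nat \<Rightarrow> nat \<Rightarrow> real) \<Rightarrow> nat \<Rightarrow> nat \<Rightarrow> real" where
  "nabla_coeff w K Psi = (\<lambda>i j. blk w ((K + 1) * w) Psi i j - blk 0 ((K + 1) * w) Psi i j)"

text \<open>Quadratic difference form of order K: Q(x)(k) = x_[k-K,k]^T Phi x_[k-K,k]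
  (meaningful for k >= K).\<close>
definition qdf :: "nat \<Rightarrow> nat \<Rightarrow> (nat \<Rightarrow> nat \<Rightarrow> real) \<Rightarrow> (nat \<Rightarrow> nat \<Rightarrow> real) \<Rightarrow> nat \<Rightarrow> real" where
  "qdf w K Phi x k = quadf ((K + 1) * w) Phi (stack w (k - K) k x)"

definition linear_behavior :: "nat \<Rightarrow> (nat \<Rightarrow> nat \<Rightarrow> real) set \<Rightarrow> bool" where
  "linear_behavior w B \<longleftrightarrow> (\<forall>x\<in>B. sig_traj w x) \<and> (\<lambda>t i. 0) \<in> B \<and>
     (\<forall>x\<in>B. \<forall>y\<in>B. \<forall>c d::real. (\<lambda>t i. c * x t i + d * y t i) \<in> B)"

definition time_invariant :: "(nat \<Rightarrow> nat \<Rightarrow> real) set \<Rightarrow> bool" where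
  "time_invariant B \<longleftrightarrow> (\<forall>x\<in>B. (\<lambda>t. x (t + 1)) \<in> B)"

definition lag_ok :: "nat \<Rightarrow> (nat \<Rightarrow> nat \<Rightarrow> real) set \<Rightarrow> nat \<Rightarrow> bool" where
  "lag_ok w B ell \<longleftrightarrow> (\<forall>x. sig_traj w x \<longrightarrow>
      (\<forall>k. \<exists>y\<in>B. \<forall>t\<in>{k..k+ell}. y t = x t) \<longrightarrow> x \<in> B)"

definition lag :: "nat \<Rightarrow> (nat \<Rightarrow> nat \<Rightarrow> real) set \<Rightarrow> nat" where
  "lag w B = (LEAST ell. lag_ok w B ell)"

definition B_sV :: "((nat \<Rightarrow> real) \<times> (nat \<Rightarrow> real)) set" where
  "B_sV = {(s, V). (\<forall>k\<ge>1. V k - V (k - 1) \<le> s k) \<and> (\<forall>k. V k \<ge> 0)}"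

text \<open>Interconnection s = Q_Phi(w), V = Q_Psi(w), imposed wherever the QdFs are defined.\<close>
definition B_Pi :: "nat \<Rightarrow> nat \<Rightarrow> (nat \<Rightarrow> nat \<Rightarrow> real) \<Rightarrow> nat \<Rightarrow> (nat \<Rightarrow> nat \<Rightarrow> real) \<Rightarrow>
    ((nat \<Rightarrow> nat \<Rightarrow> real) \<times> (nat \<Rightarrow> real) \<times> (nat \<Rightarrow> real)) set" where
  "B_Pi w KPhi Phi KPsi Psi = {(x, s, V). (\<forall>k\<ge>KPhi. s k = qdf w KPhi Phi x k) \<and>
                                           (\<forall>k\<ge>KPsi. V k = qdf w KPsi Psi x k)}"

definition B_ps :: "nat \<Rightarrow> (nat \<Rightarrow> nat \<Rightarrow> real) set \<Rightarrow> nat \<Rightarrow> (nat \<Rightarrow> nat \<Rightarrow> real) \<Rightarrow> nat \<Rightarrow>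
    (nat \<Rightarrow> nat \<Rightarrow> real) \<Rightarrow> ((nat \<Rightarrow> nat \<Rightarrow> real) \<times> (nat \<Rightarrow> real) \<times> (nat \<Rightarrow> real)) set" where
  "B_ps w B KPhi Phi KPsi Psi =
     {(x, s, V). x \<in> B \<and> (s, V) \<in> B_sV} \<inter> B_Pi w KPhi Phi KPsi Psi"

definition proj_w :: "('a \<times> 'b) set \<Rightarrow> 'a set" where
  "proj_w S = fst ` S"

end

theory Submission
  imports Defs
begin

lemma quadf_cong: "(\<And>i. i < n \<Longrightarrow> u i = v i) \<Longrightarrow> quadf n A u = quadf n A v"
  unfolding quadf_def by (intro sum.cong refl) auto

lemma quadf_diff: "quadf n (\<lambda>i j. A i j - B i j) v = quadf n A v - quadf n B v"
  unfolding quadf_def by (simp add: algebra_simps sum_subtractf)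

lemma sum_blk:
  fixes g :: "nat \<Rightarrow> real"
  assumes "off + m \<le> n" "\<And>i. i < n \<Longrightarrow> \<not> (off \<le> i \<and> i < off + m) \<Longrightarrow> g i = 0"
  shows "(\<Sum>i<n. g i) = (\<Sum>i<m. g (off + i))"
proof -
  have "(\<Sum>i<n. g i) = (\<Sum>i\<in>{off..<off+m}. g i)"
    using assms by (intro sum.mono_neutral_right) auto
  also have "\<dots> = (\<Sum>i<m. g (off + i))"
    by (induct m) (auto simp: add.commute)
  finally show ?thesis .
qed

lemma quadf_blk:
  assumes "off + m \<le> n"
  shows "quadf n (blk off m A) v = quadf m A (\<lambda>i. v (off + i))"
proof -
  have "quadf n (blk off m A) v = (\<Sum>i<m. \<Sum>j<n. v (off+i) * blk off m A (off+i) j * v j)"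
    unfolding quadf_def using assms by (intro sum_blk) (auto simp: blk_def)
  also have "\<dots> = (\<Sum>i<m. \<Sum>j<m. v (off+i) * blk off m A (off+i) (off+j) * v (off+j))"
    using assms by (intro sum.cong refl sum_blk) (auto simp: blk_def)
  also have "\<dots> = quadf m A (\<lambda>i. v (off + i))"
    unfolding quadf_def blk_def by simp
  finally show ?thesis .
qed

lemma stack_shift:
  assumes "a \<le> a'" "b' \<le> b" "i < (b' + 1 - a') * w"
  shows "stack w a b x ((a' - a) * w + i) = stack w a' b' x i"
proof -
  have w: "w > 0" using assms(3) by (cases w) auto
  have "b' + 1 > a'" using assms(3) by (cases "b'+1 > a'") auto
  have lt: "(a' - a) * w + i < (b + 1 - a) * w"
  proof -
    have "(a' - a) * w + i < (a' - a) * w + (b' + 1 - a') * w" using assms(3) by simp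
    also have "\<dots> = (b' + 1 - a) * w" using assms \<open>b'+1>a'\<close> by (simp add: add_mult_distrib[symmetric])
    also have "\<dots> \<le> (b + 1 - a) * w" using assms by (intro mult_right_mono) auto
    finally show ?thesis .
  qed
  have d: "((a' - a) * w + i) div w = (a' - a) + i div w" using w by simp
  have m: "((a' - a) * w + i) mod w = i mod w" by simp
  show ?thesis unfolding stack_def using lt assms d m by simp
qed

lemma quadf_mulv_congr:
  "quadf N M (mulv N nz F z) = quadf nz (congr N M F) z"
proof -
  have "quadf N M (mulv N nz F z) = (\<Sum>a<N. \<Sum>b<N. (\<Sum>i<nz. F a i * z i) * M a b * (\<Sum>j<nz. F b j * z j))"
    unfolding quadf_def mulv_def by simp
  also have "\<dots> = (\<Sum>a<N. \<Sum>b<N. \<Sum>i<nz. \<Sum>j<nz. z i * (F a i * M a b * F b j) * z j)"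
    by (simp add: sum_distrib_left sum_distrib_right mult_ac)
  also have "\<dots> = (\<Sum>a<N. \<Sum>i<nz. \<Sum>b<N. \<Sum>j<nz. z i * (F a i * M a b * F b j) * z j)"
    by (rule sum.cong[OF refl], rule sum.swap)
  also have "\<dots> = (\<Sum>i<nz. \<Sum>a<N. \<Sum>b<N. \<Sum>j<nz. z i * (F a i * M a b * F b j) * z j)"
    by (rule sum.swap)
  also have "\<dots> = (\<Sum>i<nz. \<Sum>a<N. \<Sum>j<nz. \<Sum>b<N. z i * (F a i * M a b * F b j) * z j)"
    by (rule sum.cong[OF refl], rule sum.cong[OF refl], rule sum.swap)
  also have "\<dots> = (\<Sum>i<nz. \<Sum>j<nz. \<Sum>a<N. \<Sum>b<N. z i * (F a i * M a b * F b j) * z j)"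
    by (rule sum.cong[OF refl], rule sum.swap)
  also have "\<dots> = quadf nz (congr N M F) z"
    unfolding quadf_def congr_def by (simp add: sum_distrib_left sum_distrib_right)
  finally show ?thesis .
qed

theorem proposition9:
  fixes w nz Lm Lp KPhi KPsi :: nat
    and B :: "(nat \<Rightarrow> nat \<Rightarrow> real) set"
    and F Phi Psi :: "nat \<Rightarrow> nat \<Rightarrow> real"
  defines "N \<equiv> (Lm + 1) * w"
  defines "PhiHat \<equiv> blk ((Lm - KPhi) * w) ((KPhi + 1) * w) Phi"
  defines "NPsiHat \<equiv> blk ((Lm - KPsi - 1) * w) ((KPsi + 2) * w) (nabla_coeff w KPsi Psi)"
  defines "M \<equiv> (\<lambda>i j. PhiHat i j - NPsiHat i j)"
  defines "Fl \<equiv> (\<lambda>l::nat. \<lambda>i j. F (l * w + i) j)"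
  assumes lin: "linear_behavior w B"
    and ti: "time_invariant B"
    and repr: "\<forall>k\<ge>Lm. {stack w (k - Lm) (k + Lp) x | x. x \<in> B}
                        = range (mulv ((Lm + Lp + 1) * w) nz F)"
    and symPhi: "symm ((KPhi + 1) * w) Phi"
    and symPsi: "symm ((KPsi + 1) * w) Psi"
    and Lm_def: "Lm = max KPhi (KPsi + 1)"
    and lag_exists: "\<exists>ell. lag_ok w B ell"
    and lag_lt: "lag w B < Lm"
    and Psi_psd: "psd ((KPsi + 1) * w) Psi"
    and ineq: "\<forall>l\<le>Lp. \<forall>z. quadf N M (mulv N nz (Fl l) z) \<ge> 0"
  shows "B = proj_w (B_ps w B KPhi Phi KPsi Psi) \<and>
         (Lp = 0 \<longrightarrow>
            ((\<forall>l\<le>Lp. \<forall>z. quadf N M (mulv N nz (Fl l) z) \<ge> 0)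
               \<longleftrightarrow> psd nz (congr N M F)))"
  proof -
  define QPhi where "QPhi x k = qdf w KPhi Phi x k" for x k
  define QPsi where "QPsi x k = qdf w KPsi Psi x k" for x k
  have LmPhi: "KPhi \<le> Lm" and LmPsi: "KPsi + 1 \<le> Lm" using Lm_def by auto
  have key: "QPsi x k - QPsi x (k - 1) \<le> QPhi x k" if xB: "x \<in> B" and k: "k \<ge> Lm" for x k
  proof -
    define v where "v = stack w (k - Lm) k x"
    have "stack w (k - Lm) (k + Lp) x \<in> range (mulv ((Lm + Lp + 1) * w) nz F)"
      using repr k xB by blast
    then obtain z where z: "stack w (k - Lm) (k + Lp) x = mulv ((Lm + Lp + 1) * w) nz F z" by auto
    have e1: "quadf N M v = quadf N M (mulv N nz (Fl 0) z)"
    proof (rule quadf_cong)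
      fix i assume i: "i < N"
      have "v i = stack w (k - Lm) (k + Lp) x ((k - Lm - (k - Lm)) * w + i)"
        unfolding v_def using stack_shift[of "k - Lm" "k - Lm" k "k + Lp" i w x] i k
        by (simp add: N_def)
      also have "\<dots> = mulv ((Lm + Lp + 1) * w) nz F z i" using z by simp
      also have "\<dots> = mulv N nz (Fl 0) z i"
      proof -
        have "N \<le> (Lm + Lp + 1) * w" unfolding N_def by simp
        then show ?thesis using i unfolding mulv_def Fl_def by auto
      qed
      finally show "v i = mulv N nz (Fl 0) z i" .
    qed
    have p1: "quadf N PhiHat v = QPhi x k"
    proof -
      have "quadf N PhiHat v = quadf ((KPhi + 1) * w) Phi (\<lambda>i. v ((Lm - KPhi) * w + i))"
        unfolding PhiHat_def N_def using LmPhi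
        by (intro quadf_blk) (simp add: add_mult_distrib[symmetric])
      also have "\<dots> = quadf ((KPhi + 1) * w) Phi (stack w (k - KPhi) k x)"
      proof (rule quadf_cong)
        fix i assume i: "i < (KPhi + 1) * w"
        have "k - KPhi - (k - Lm) = Lm - KPhi" using k LmPhi by simp
        moreover have "k + 1 - (k - KPhi) = KPhi + 1" using k LmPhi by simp
        ultimately show "v ((Lm - KPhi) * w + i) = stack w (k - KPhi) k x i"
          unfolding v_def using stack_shift[of "k - Lm" "k - KPhi" k k i w x] i k LmPhi by simp
      qed
      finally show ?thesis unfolding QPhi_def qdf_def by simp
    qed
    have p2: "quadf N NPsiHat v = QPsi x k - QPsi x (k - 1)"
    proof -
      define u where "u i = v ((Lm - KPsi - 1) * w + i)" for i
      have "quadf N NPsiHat v = quadf ((KPsi + 2) * w) (nabla_coeff w KPsi Psi) u"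
        unfolding NPsiHat_def N_def u_def
      proof (intro quadf_blk)
        obtain d where "Lm = KPsi + 1 + d" using le_Suc_ex[OF LmPsi] by blast
        then show "(Lm - KPsi - 1) * w + (KPsi + 2) * w \<le> (Lm + 1) * w" by (simp add: algebra_simps)
      qed
      also have "\<dots> = quadf ((KPsi + 2) * w) (blk w ((KPsi + 1) * w) Psi) u
                     - quadf ((KPsi + 2) * w) (blk 0 ((KPsi + 1) * w) Psi) u"
        unfolding nabla_coeff_def by (rule quadf_diff)
      also have "quadf ((KPsi + 2) * w) (blk w ((KPsi + 1) * w) Psi) u
                 = quadf ((KPsi + 1) * w) Psi (\<lambda>i. u (w + i))"
        by (intro quadf_blk) simp
      also have "\<dots> = QPsi x k"
        unfolding QPsi_def qdf_def
      proof (rule quadf_cong)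
        fix i assume i: "i < (KPsi + 1) * w"
        have "k - KPsi - (k - Lm) = Lm - KPsi" using k LmPsi by simp
        moreover have "k + 1 - (k - KPsi) = KPsi + 1" using k LmPsi by simp
        moreover have eqw: "(Lm - KPsi - 1) * w + (w + i) = (Lm - KPsi) * w + i"
        proof -
          obtain d where "Lm = KPsi + 1 + d" using le_Suc_ex[OF LmPsi] by blast
          then show ?thesis by (simp add: algebra_simps)
        qed
        ultimately show "u (w + i) = stack w (k - KPsi) k x i"
          unfolding u_def eqw unfolding v_def using stack_shift[of "k - Lm" "k - KPsi" k k i w x] i k LmPsi by simp
      qed
      also have "quadf ((KPsi + 2) * w) (blk 0 ((KPsi + 1) * w) Psi) u
                 = quadf ((KPsi + 1) * w) Psi (\<lambda>i. u (0 + i))"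
        by (intro quadf_blk) simp
      also have "\<dots> = QPsi x (k - 1)"
        unfolding QPsi_def qdf_def
      proof (rule quadf_cong)
        fix i assume i: "i < (KPsi + 1) * w"
        have "k - 1 - KPsi - (k - Lm) = Lm - KPsi - 1" using k LmPsi by simp
        moreover have "k - 1 + 1 - (k - 1 - KPsi) = KPsi + 1" using k LmPsi by simp
        ultimately show "u (0 + i) = stack w (k - 1 - KPsi) (k - 1) x i"
          unfolding u_def v_def using stack_shift[of "k - Lm" "k - 1 - KPsi" "k - 1" k i w x] i k LmPsi
          by simp
      qed
      finally show ?thesis .
    qed
    have "quadf N M v = QPhi x k - (QPsi x k - QPsi x (k - 1))"
      unfolding M_def quadf_diff p1 p2 ..
    moreover have "quadf N M v \<ge> 0" using e1 ineq by simp
    ultimately show ?thesis by simp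
  qed
  have part1: "B = proj_w (B_ps w B KPhi Phi KPsi Psi)"
  proof
    show "proj_w (B_ps w B KPhi Phi KPsi Psi) \<subseteq> B"
      unfolding proj_w_def B_ps_def by auto
  next
    show "B \<subseteq> proj_w (B_ps w B KPhi Phi KPsi Psi)"
    proof
      fix x assume xB: "x \<in> B"
      define C where "C = (\<Sum>k\<le>Lm. \<bar>QPhi x k\<bar>) + \<bar>QPsi x KPsi\<bar>"
      define V where "V k = (if k \<ge> KPsi then QPsi x k else C * real (KPsi - k))" for k
      define s where "s k = (if k \<ge> KPhi then QPhi x k else V k - V (k - 1))" for k
      have C0: "C \<ge> 0" unfolding C_def by (simp add: sum_nonneg)
      have Cphi: "\<bar>QPhi x k\<bar> \<le> C" if "k \<le> Lm" for k
      proof -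
        have "\<bar>QPhi x k\<bar> \<le> (\<Sum>k\<le>Lm. \<bar>QPhi x k\<bar>)"
          by (rule member_le_sum) (use that in auto)
        then show ?thesis unfolding C_def by simp
      qed
      have Cpsi: "\<bar>QPhi x KPsi\<bar> + \<bar>QPsi x KPsi\<bar> \<le> C"
      proof -
        have "\<bar>QPhi x KPsi\<bar> \<le> (\<Sum>k\<le>Lm. \<bar>QPhi x k\<bar>)"
          by (rule member_le_sum) (use LmPsi in auto)
        then show ?thesis unfolding C_def by simp
      qed
      have Vnn: "V k \<ge> 0" for k
        using Psi_psd C0 unfolding V_def QPsi_def qdf_def psd_def by auto
      have diss: "V k - V (k - 1) \<le> s k" if "k \<ge> 1" for k
      proof (cases "k \<ge> KPhi")
        case False then show ?thesis unfolding s_def by simp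
      next
        case True
        show ?thesis
        proof (cases "k \<ge> Lm")
          case True
          then have "k \<ge> KPsi" "k - 1 \<ge> KPsi" using LmPsi by auto
          with key[OF xB True] \<open>k \<ge> KPhi\<close> show ?thesis unfolding s_def V_def by simp
        next
          case False
          then have k1: "k \<le> KPsi" using Lm_def \<open>k \<ge> KPhi\<close> by auto
          have Vk1: "V (k - 1) = C * real (KPsi - k + 1)"
          proof -
            have "\<not> KPsi \<le> k - 1" using k1 that by linarith
            moreover have "KPsi - (k - 1) = KPsi - k + 1" using k1 that by linarith
            ultimately show ?thesis unfolding V_def by simp
          qed
          have sk: "s k = QPhi x k" unfolding s_def using \<open>k \<ge> KPhi\<close> by simp
          have bnd: "\<bar>QPhi x k\<bar> \<le> C" using Cphi False by simp
          show ?thesis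
          proof (cases "k = KPsi")
            case True
            then have "V k = QPsi x KPsi" "real (KPsi - k + 1) = 1" unfolding V_def by simp_all
            moreover have "QPsi x KPsi \<le> \<bar>QPsi x KPsi\<bar>" "- QPhi x KPsi \<le> \<bar>QPhi x KPsi\<bar>" by simp_all
            ultimately show ?thesis unfolding Vk1 sk using Cpsi True by simp
          next
            case False
            then have "V k = C * real (KPsi - k)" unfolding V_def using k1 by simp
            moreover have "real (KPsi - k + 1) = real (KPsi - k) + 1" by simp
            ultimately show ?thesis unfolding Vk1 sk using bnd
              by (simp add: algebra_simps)
          qed
        qed
      qed
      have "(x, s, V) \<in> B_ps w B KPhi Phi KPsi Psi"
        unfolding B_ps_def B_sV_def B_Pi_def
        using xB diss Vnn by (auto simp: s_def V_def QPhi_def QPsi_def)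
      then show "x \<in> proj_w (B_ps w B KPhi Phi KPsi Psi)"
        unfolding proj_w_def by force
    qed
  qed
  have part2: "(\<forall>l\<le>Lp. \<forall>z. quadf N M (mulv N nz (Fl l) z) \<ge> 0) \<longleftrightarrow> psd nz (congr N M F)"
    if "Lp = 0"
  proof -
    have "Fl 0 = F" unfolding Fl_def by simp
    then show ?thesis using that unfolding psd_def by (simp add: quadf_mulv_congr)
  qed
  show ?thesis using part1 part2 by blast
qed

end
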